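(* Let $n,m\in\mathbb{N}_0$. Then $L_n^{(m)}(1)=0$ if and only if $n=1$ and $m=0$.
   Context: Generalized Laguerre polynomials: $L_n^{(\alpha)}(x)=\sum_{j=0}^n(-1)^j\binom{n+\alpha}{n-j}\frac{x^j}{j!}$. *)

theory Defs
  imports Complex_Main
begin

definition laguerre :: "nat \<Rightarrow> real \<Rightarrow> real \<Rightarrow> real" where
  "laguerre n \<alpha> x = (\<Sum>j=0..n. (-1)^j * ((real n + \<alpha>) gchoose (n - j)) * x ^ j / fact j)"

end

theory Submission
  imports Defs
begin

lemma lag1: "laguerre n (real m) 1 = (\<Sum>j=0..n. (-1)^j * real ((n+m) choose (n-j)) / fact j)"
  unfolding laguerre_def
  by (simp add: binomial_gbinomial[symmetric] flip: of_nat_add)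

lemma factq: assumes "j < n" shows "(fact n :: real) / fact j = real n * real (fact (n-1) div fact j)"
proof -
  have d: "fact j dvd (fact (n-1) :: nat)" using assms by (intro fact_dvd) simp
  have "fact n = n * (fact (n-1) :: nat)" using assms by (simp add: fact_reduce)
  hence "(fact n :: real) = real n * real (fact (n-1) div fact j) * fact j"
    using d by (metis (no_types) dvd_div_mult_self of_nat_fact of_nat_mult mult.assoc)
  thus ?thesis by simp
qed

lemma main_eq:
  assumes "n \<ge> 1"
  shows "fact n * laguerre n (real m) 1 =
     real_of_int (int n * (\<Sum>j<n. (-1)^j * int ((n+m) choose (n-j)) * int (fact (n-1) div fact j)) + (-1)^n)"
proof -
  have "fact n * laguerre n (real m) 1 = (\<Sum>j=0..n. (-1)^j * real ((n+m) choose (n-j)) * (fact n / fact j))"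
    unfolding lag1 sum_distrib_left by (rule sum.cong) auto
  also have "\<dots> = (\<Sum>j<n. (-1)^j * real ((n+m) choose (n-j)) * (fact n / fact j)) + (-1)^n"
    by (simp add: atLeast0AtMost lessThan_Suc_atMost[symmetric])
  also have "(\<Sum>j<n. (-1)^j * real ((n+m) choose (n-j)) * (fact n / fact j))
     = (\<Sum>j<n. real n * ((-1)^j * real ((n+m) choose (n-j)) * real (fact (n-1) div fact j)))"
    by (rule sum.cong) (auto simp: factq)
  finally show ?thesis by (simp add: sum_distrib_left)
qed

theorem proposition2:
  fixes n m :: nat
  shows "laguerre n (real m) 1 = 0 \<longleftrightarrow> n = 1 \<and> m = 0"
proof (cases "n = 0")
  case True
  thus ?thesis by (simp add: laguerre_def)
next
  case n0: False
  show ?thesis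
  proof (cases "n = 1")
    case True
    have "laguerre 1 (real m) 1 = real m"
      by (simp add: laguerre_def)
    thus ?thesis using True by simp
  next
    case False
    with n0 have n2: "n \<ge> 2" by simp
    define A where "A = (\<Sum>j<n. (-1)^j * int ((n+m) choose (n-j)) * int (fact (n-1) div fact j))"
    have "laguerre n (real m) 1 \<noteq> 0"
    proof
      assume "laguerre n (real m) 1 = 0"
      with main_eq[of n m] n2 have "real_of_int (int n * A + (-1)^n) = 0"
        unfolding A_def by simp
      hence "int n * A + (-1)^n = 0" by linarith
      hence "int n dvd (-1)^n" by (metis add.commute add_eq_0_iff dvd_minus_iff dvd_triv_left)
      moreover have "((-1::int)^n) dvd 1" by (cases "even n") auto
      ultimately have "int n dvd 1" by (rule dvd_trans)
      thus False using n2 by simp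
    qed
    thus ?thesis using False by simp
  qed
qed

end
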